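(* Let $N\ge1$, let $f:\{0,1\}^N\to\{-1,1\}$, and suppose a quantum query algorithm computes $f$ with error probability at most $\epsilon$ using $T$ queries. Then for every positive odd integer $k$, $$T\;\ge\;\frac12\left[1-\sqrt[k]{\frac{1+2\sqrt{\epsilon}}{2}+\frac{1-2\sqrt{\epsilon}}{2}\sum_{s\in\{0,1\}^N}\hat f_s^{\,2}\,(1-2\lambda_s)^k}\right]N .$$
   Context: Quantum query model: the input $x=(x_0,\dots,x_{N-1})\in\{0,1\}^N$ is accessible only through an oracle. The algorithm works in a Hilbert space with basis states $|i\rangle_I|a\rangle_A|w\rangle_W|r\rangle_R$ (index register $i\in\{0,\dots,N-1\}$, one-bit answer register $a$, a working register $w$ of fixed size, and a one-bit result register $r$). An algorithm with $T$ queries is a sequence $U_0, O_x, U_1, O_x,\dots,O_x,U_T$ of unitaries, where the $U_j$ are arbitrary unitaries independent of $x$ and the query gate is $O_x:|i\rangle|a\rangle|w\rangle|r\rangle\mapsto|i\rangle|a\oplus x_i\rangle|w\rangle|r\rangle$. It starts from a fixed basis state, and at the end the result register is measured. It computes $f$ with error probability at most $\epsilon$ if for every $x$ the measured result equals $f(x)$ with probability at least $1-\epsilon$. Fourier coefficients: $\hat f_s=E_x\big[f(x)(-1)^{s\cdot x}\big]$ for $s\in\{0,1\}^N$, $x$ uniform in $\{0,1\}^N$, $s\cdot x=\sum_i s_ix_i$. For $s\in\{0,1\}^N$, $|s|$ is the number of ones in $s$ and $\lambda_s=|s|/N$. The $k$-th root is the real $k$-th root. *)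

theory Defs
  imports Complex_Main
begin

text \<open>Inputs x in {0,1}^N are bool lists of length N (True = 1).\<close>

definition cube :: "nat \<Rightarrow> bool list set" where
  "cube N = {xs. length xs = N}"

definition dotp :: "bool list \<Rightarrow> bool list \<Rightarrow> nat" where
  "dotp s x = card {i. i < length s \<and> i < length x \<and> s ! i \<and> x ! i}"

definition hweight :: "bool list \<Rightarrow> nat" where
  "hweight s = card {i. i < length s \<and> s ! i}"

definition fourier :: "nat \<Rightarrow> (bool list \<Rightarrow> real) \<Rightarrow> bool list \<Rightarrow> real" where
  "fourier N f s = (\<Sum>x\<in>cube N. f x * (-1) ^ dotp s x) / 2 ^ N"

text \<open>Basis states |i>|a>|w>|r> are tuples (i,a,w,r), with i < N and w < W
  (W = dimension of the working register).\<close>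

type_synonym basis = "nat \<times> bool \<times> nat \<times> bool"
type_synonym qstate = "basis \<Rightarrow> complex"
type_synonym qmat = "basis \<Rightarrow> basis \<Rightarrow> complex"

definition basis_set :: "nat \<Rightarrow> nat \<Rightarrow> basis set" where
  "basis_set N W = {0..<N} \<times> UNIV \<times> {0..<W} \<times> UNIV"

definition unitary_on :: "basis set \<Rightarrow> qmat \<Rightarrow> bool" where
  "unitary_on B U \<longleftrightarrow>
     (\<forall>i\<in>B. \<forall>j\<in>B. (\<Sum>k\<in>B. cnj (U k i) * U k j) = (if i = j then 1 else 0))"

definition apply_mat :: "basis set \<Rightarrow> qmat \<Rightarrow> qstate \<Rightarrow> qstate" where
  "apply_mat B U v = (\<lambda>i. if i \<in> B then (\<Sum>j\<in>B. U i j * v j) else 0)"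

definition ket :: "basis \<Rightarrow> qstate" where
  "ket b = (\<lambda>c. if c = b then 1 else 0)"

definition query_gate :: "bool list \<Rightarrow> qmat" where
  "query_gate x = (\<lambda>(i', a', w', r') (i, a, w, r).
      if (i', a', w', r') = (i, a \<noteq> x ! i, w, r) then 1 else 0)"

text \<open>Algorithm U_0, O_x, U_1, ..., O_x, U_T given by U0 and the list Us = [U_1,...,U_T],
  started in basis state b0.\<close>
definition final_state ::
  "nat \<Rightarrow> nat \<Rightarrow> basis \<Rightarrow> qmat \<Rightarrow> qmat list \<Rightarrow> bool list \<Rightarrow> qstate" where
  "final_state N W b0 U0 Us x =
     foldl (\<lambda>v U. apply_mat (basis_set N W) U (apply_mat (basis_set N W) (query_gate x) v))
           (apply_mat (basis_set N W) U0 (ket b0)) Us"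

definition prob_result ::
  "nat \<Rightarrow> nat \<Rightarrow> basis \<Rightarrow> qmat \<Rightarrow> qmat list \<Rightarrow> bool list \<Rightarrow> bool \<Rightarrow> real" where
  "prob_result N W b0 U0 Us x r =
     (\<Sum>b\<in>{b\<in>basis_set N W. snd (snd (snd b)) = r}.
        (cmod (final_state N W b0 U0 Us x b))\<^sup>2)"

text \<open>Result bit r encodes the value (-1)^r, i.e. True \<leftrightarrow> -1.\<close>
definition computes_with_error ::
  "nat \<Rightarrow> nat \<Rightarrow> basis \<Rightarrow> qmat \<Rightarrow> qmat list \<Rightarrow> (bool list \<Rightarrow> real) \<Rightarrow> real \<Rightarrow> bool" where
  "computes_with_error N W b0 U0 Us f \<epsilon> \<longleftrightarrow>
     b0 \<in> basis_set N W \<and>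
     unitary_on (basis_set N W) U0 \<and> (\<forall>U\<in>set Us. unitary_on (basis_set N W) U) \<and>
     (\<forall>x\<in>cube N. prob_result N W b0 U0 Us x (f x = -1) \<ge> 1 - \<epsilon>)"

end

theory Submission
  imports Defs "HOL-Analysis.L2_Norm"
begin


definition chi :: "nat set \<Rightarrow> bool list \<Rightarrow> 'a::comm_ring_1" where
  "chi S x = (\<Prod>i\<in>S. if x ! i then -1 else 1)"

definition flip :: "nat \<Rightarrow> bool list \<Rightarrow> bool list" where
  "flip i x = x[i := \<not> x ! i]"

lemma finite_cube: "finite (cube N)"
  unfolding cube_def using finite_lists_length_eq[of "UNIV::bool set" N] by simp

lemma card_cube: "card (cube N) = 2 ^ N"
  unfolding cube_def using card_lists_length_eq[of "UNIV::bool set" N] by simp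

lemma flip_cube: "x \<in> cube N \<Longrightarrow> i < N \<Longrightarrow> flip i x \<in> cube N"
  by (simp add: cube_def flip_def)

lemma flip_flip: "flip i (flip i x) = x"
  by (cases "i < length x") (simp_all add: flip_def list_update_beyond)

lemma chi_sq: "finite S \<Longrightarrow> chi S x * chi S x = (1::'a::comm_ring_1)"
  unfolding chi_def by (auto simp: prod.distrib[symmetric] intro!: prod.neutral)

lemma chi_flip:
  assumes "finite S" "i < length x"
  shows "chi S (flip i x) = (if i \<in> S then -1 else 1) * (chi S x :: 'a::comm_ring_1)"
proof (cases "i \<in> S")
  case True
  have "chi S (flip i x) = (if flip i x ! i then -1 else 1) * (\<Prod>j\<in>S-{i}. if flip i x ! j then -1 else (1::'a))"
    unfolding chi_def using prod.remove[OF assms(1) True] by blast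
  also have "(\<Prod>j\<in>S-{i}. if flip i x ! j then -1 else (1::'a)) = (\<Prod>j\<in>S-{i}. if x ! j then -1 else 1)"
    by (rule prod.cong) (auto simp: flip_def)
  also have "chi S x = (if x ! i then -1 else 1) * (\<Prod>j\<in>S-{i}. if x ! j then -1 else (1::'a))"
    unfolding chi_def using prod.remove[OF assms(1) True] by blast
  ultimately show ?thesis using True assms by (simp add: flip_def)
next
  case False
  have "\<forall>j\<in>S. flip i x ! j = x ! j" using False by (metis flip_def nth_list_update_neq)
  then have "chi S (flip i x) = (chi S x :: 'a)"
    unfolding chi_def by (intro prod.cong) auto
  then show ?thesis using False by simp
qed

lemma of_real_chi: "of_real (chi S x) = (chi S x :: 'a::{real_algebra_1,comm_ring_1})"
  unfolding chi_def of_real_prod by (rule prod.cong) auto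

lemma chi_single: "chi {i} x = (if x ! i then -1 else 1)"
  by (simp add: chi_def)

lemma sum_flip_reindex:
  assumes "i < N"
  shows "(\<Sum>x\<in>cube N. g (flip i x)) = (\<Sum>x\<in>cube N. g x)"
proof -
  show ?thesis
    by (rule sum.reindex_bij_witness[of _ "flip i" "flip i"]) (auto simp: flip_cube flip_flip assms)
qed

lemma orth:
  assumes "S \<subseteq> {..<N}" "T \<subseteq> {..<N}"
  shows "(\<Sum>x\<in>cube N. chi S x * chi T x) = (if S = T then 2 ^ N else (0::'a::field_char_0))"
proof (cases "S = T")
  case True
  have fS: "finite S" using assms finite_subset by blast
  show ?thesis using True fS by (simp add: chi_sq card_cube)
next
  case False
  then obtain i where i: "i \<in> S \<and> i \<notin> T \<or> i \<in> T \<and> i \<notin> S" by blast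
  have iN: "i < N" using i assms by blast
  have fS: "finite S" "finite T" using assms finite_subset by blast+
  have "(\<Sum>x\<in>cube N. chi S x * chi T x) = (\<Sum>x\<in>cube N. chi S (flip i x) * chi T (flip i x) :: 'a)"
    using sum_flip_reindex[OF iN, of "\<lambda>x. chi S x * chi T x"] by (rule sym)
  also have "\<dots> = (\<Sum>x\<in>cube N. - (chi S x * chi T x))"
    by (rule sum.cong) (use i iN fS in \<open>auto simp: chi_flip cube_def\<close>)
  finally have "(\<Sum>x\<in>cube N. chi S x * chi T x) = (0::'a)"
    by (simp add: sum_negf) 
  then show ?thesis using False by simp
qed

lemma dual:
  assumes "x \<in> cube N" "y \<in> cube N"
  shows "(\<Sum>S\<in>Pow {..<N}. chi S x * chi S y) = (if x = y then 2 ^ N else (0::'a::comm_ring_1))"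
proof -
  define \<sigma> where "\<sigma> i = (if x ! i then -1 else 1) * (if y ! i then -1 else (1::'a))" for i
  have "(\<Sum>S\<in>Pow {..<N}. chi S x * chi S y) = (\<Sum>S\<in>Pow {..<N}. (\<Prod>i\<in>S. \<sigma> i) * (\<Prod>i\<in>{..<N}-S. 1))"
    unfolding chi_def \<sigma>_def by (simp add: prod.distrib)
  also have "\<dots> = (\<Prod>i<N. \<sigma> i + 1)"
    by (rule prod_add[symmetric]) simp
  also have "\<dots> = (if x = y then 2 ^ N else 0)"
  proof (cases "x = y")
    case True
    then have "\<forall>i. \<sigma> i + 1 = 2" by (simp add: \<sigma>_def)
    then show ?thesis using True by simp
  next
    case False
    then obtain i where "i < N" "x ! i \<noteq> y ! i"
      using assms nth_equalityI[of x y] by (auto simp: cube_def)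
    then have "i \<in> {..<N}" "\<sigma> i + 1 = 0" by (auto simp: \<sigma>_def)
    then show ?thesis using False by (metis finite_lessThan prod_zero)
  qed
  finally show ?thesis .
qed

definition fhat :: "nat \<Rightarrow> (bool list \<Rightarrow> 'a::field_char_0) \<Rightarrow> nat set \<Rightarrow> 'a" where
  "fhat N g S = (\<Sum>y\<in>cube N. g y * chi S y) / 2 ^ N"

lemma expansion:
  assumes "x \<in> cube N"
  shows "g x = (\<Sum>S\<in>Pow {..<N}. fhat N g S * chi S x)"
proof -
  have "(\<Sum>S\<in>Pow {..<N}. fhat N g S * chi S x)
      = (\<Sum>S\<in>Pow {..<N}. \<Sum>y\<in>cube N. g y * (chi S x * chi S y) / 2 ^ N)"
    unfolding fhat_def sum_divide_distrib sum_distrib_right by (intro sum.cong refl) (simp add: field_simps)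
  also have "\<dots> = (\<Sum>y\<in>cube N. g y * (\<Sum>S\<in>Pow {..<N}. chi S x * chi S y) / 2 ^ N)"
    by (subst sum.swap) (simp add: sum_divide_distrib sum_distrib_left)
  also have "\<dots> = (\<Sum>y\<in>cube N. if y = x then g x else 0)"
    by (rule sum.cong) (use assms in \<open>auto simp: dual\<close>)
  also have "\<dots> = g x" using assms finite_cube by simp
  finally show ?thesis by simp
qed

primrec walk :: "nat \<Rightarrow> nat \<Rightarrow> (bool list \<Rightarrow> 'a::real_field) \<Rightarrow> bool list \<Rightarrow> 'a" where
  "walk N 0 g x = g x"
| "walk N (Suc k) g x = (\<Sum>i<N. walk N k g (flip i x)) / of_nat N"

lemma walk_cong:
  assumes "\<forall>y\<in>cube N. g y = h y" "x \<in> cube N"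
  shows "walk N k g x = walk N k h x"
  using assms(2)
proof (induction k arbitrary: x)
  case 0
  then show ?case using assms by simp
next
  case (Suc k)
  then show ?case by (simp add: flip_cube)
qed

lemma walk_sum: "walk N k (\<lambda>x. \<Sum>j\<in>J. g j x) x = (\<Sum>j\<in>J. walk N k (g j) x)"
proof (induction k arbitrary: x)
  case 0
  then show ?case by simp
next
  case (Suc k)
  then show ?case by (simp add: sum_divide_distrib[symmetric] sum.swap[of _ "{..<N}"])
qed

lemma walk_cmult: "walk N k (\<lambda>x. a * g x) x = a * walk N k g x"
  by (induction k arbitrary: x) (simp_all add: sum_distrib_left)

lemma walk_add: "walk N k (\<lambda>x. g x + h x) x = walk N k g x + walk N k h x"
  by (induction k arbitrary: x) (simp_all add: sum.distrib add_divide_distrib)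

lemma walk_const: "N \<ge> 1 \<Longrightarrow> walk N k (\<lambda>x. a) x = a"
  by (induction k arbitrary: x) simp_all

lemma Re_walk: "Re (walk N k g x) = walk N k (\<lambda>y. Re (g y)) x"
  by (induction k arbitrary: x) (simp_all add: Re_divide_of_nat)

lemma walk_of_real: "walk N k (\<lambda>y. of_real (g y)) x = (of_real (walk N k g x) :: 'a::real_field)"
  by (induction k arbitrary: x) (simp_all add: of_real_sum)

lemma walk_mono:
  assumes "\<forall>y\<in>cube N. g y \<le> h y" "x \<in> cube N"
  shows "walk N k g x \<le> (walk N k h x :: real)"
  using assms(2)
proof (induction k arbitrary: x)
  case 0
  then show ?case using assms by simp
next
  case (Suc k)
  then show ?case by (simp, intro divide_right_mono sum_mono) (auto simp: flip_cube)
qed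

definition mu :: "nat \<Rightarrow> nat set \<Rightarrow> real" where
  "mu N S = 1 - 2 * real (card S) / real N"

lemma walk_chi:
  assumes "N \<ge> 1" "S \<subseteq> {..<N}" "x \<in> cube N"
  shows "walk N k (chi S) x = (of_real (mu N S) ^ k * chi S x :: 'a::{real_field})"
  using assms(3)
proof (induction k arbitrary: x)
  case 0
  then show ?case by simp
next
  case (Suc k)
  have fS: "finite S" using assms finite_subset by blast
  have len: "length x = N" using Suc.prems by (simp add: cube_def)
  have "(\<Sum>i<N. walk N k (chi S) (flip i x)) = (\<Sum>i<N. of_real (mu N S) ^ k * ((if i \<in> S then -1 else 1) * (chi S x :: 'a)))"
    by (rule sum.cong) (auto simp: Suc.IH flip_cube Suc.prems chi_flip fS len)
  also have "\<dots> = of_real (mu N S) ^ k * chi S x * (\<Sum>i<N. if i \<in> S then -1 else 1)"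
    by (simp add: sum_distrib_left sum_distrib_right mult_ac)
  also have "(\<Sum>i<N. if i \<in> S then -1 else (1::'a)) = of_nat N - 2 * of_nat (card S)"
  proof -
    have "(\<Sum>i<N. if i \<in> S then -1 else (1::'a)) = - of_nat (card ({..<N} \<inter> S)) + of_nat (card ({..<N} - S))"
      by (simp add: sum.If_cases Diff_eq)
    also have "{..<N} \<inter> S = S" using assms by blast
    also have "card ({..<N} - S) = N - card S" using assms fS by (simp add: card_Diff_subset)
    also have "of_nat (N - card S) = (of_nat N - of_nat (card S) :: 'a)"
      using assms fS card_mono[of "{..<N}" S] by (simp add: of_nat_diff)
    finally show ?thesis by simp
  qed
  finally have "(\<Sum>i<N. walk N k (chi S) (flip i x)) / of_nat N
      = of_real (mu N S) ^ k * chi S x * ((of_nat N - 2 * of_nat (card S)) / (of_nat N :: 'a))"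
    by simp
  also have "(of_nat N - 2 * of_nat (card S)) / of_nat N = (of_real (mu N S) :: 'a)"
    using assms(1) by (simp add: mu_def field_simps)
  finally show ?case by (simp add: mult_ac)
qed

definition deg_le :: "nat \<Rightarrow> nat \<Rightarrow> (bool list \<Rightarrow> complex) \<Rightarrow> bool" where
  "deg_le N d g \<longleftrightarrow> (\<exists>c. (\<forall>S. d < card S \<longrightarrow> c S = 0) \<and>
      (\<forall>x\<in>cube N. g x = (\<Sum>S\<in>Pow {..<N}. c S * chi S x)))"

lemma deg_const: "deg_le N d (\<lambda>x. a)"
proof -
  have "\<forall>x\<in>cube N. a = (\<Sum>S\<in>Pow {..<N}. (if S = {} then a else 0) * chi S x)"
  proof
    fix x
    have "(\<Sum>S\<in>Pow {..<N}. (if S = {} then a else 0) * chi S x) = (\<Sum>S\<in>Pow {..<N}. if S = {} then a * chi S x else 0)"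
      by (rule sum.cong) auto
    also have "\<dots> = a" by (simp add: sum.delta chi_def)
    finally show "a = (\<Sum>S\<in>Pow {..<N}. (if S = {} then a else 0) * chi S x)" by simp
  qed
  then show ?thesis unfolding deg_le_def
    by (intro exI[of _ "\<lambda>S. if S = {} then a else 0"]) auto
qed

lemma deg_cong: "deg_le N d g \<Longrightarrow> \<forall>x\<in>cube N. g x = h x \<Longrightarrow> deg_le N d h"
  unfolding deg_le_def by metis

lemma deg_mono: "deg_le N d g \<Longrightarrow> d \<le> d' \<Longrightarrow> deg_le N d' g"
  unfolding deg_le_def by (meson le_less_trans)

lemma deg_lin:
  assumes "finite J" "\<forall>j\<in>J. deg_le N d (g j)"
  shows "deg_le N d (\<lambda>x. \<Sum>j\<in>J. a j * g j x)"
proof -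
  have "\<forall>j\<in>J. \<exists>c. (\<forall>S. d < card S \<longrightarrow> c S = 0) \<and>
      (\<forall>x\<in>cube N. g j x = (\<Sum>S\<in>Pow {..<N}. c S * chi S x))"
    using assms(2) unfolding deg_le_def by blast
  from bchoice[OF this] obtain C where C: "\<forall>j\<in>J. (\<forall>S. d < card S \<longrightarrow> C j S = 0) \<and>
      (\<forall>x\<in>cube N. g j x = (\<Sum>S\<in>Pow {..<N}. C j S * chi S x))"
    by (elim exE) assumption
  have "\<forall>x\<in>cube N. (\<Sum>j\<in>J. a j * g j x) = (\<Sum>S\<in>Pow {..<N}. (\<Sum>j\<in>J. a j * C j S) * chi S x)"
  proof
    fix x assume x: "x \<in> cube N"
    have "(\<Sum>j\<in>J. a j * g j x) = (\<Sum>j\<in>J. \<Sum>S\<in>Pow {..<N}. a j * C j S * chi S x)"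
    proof (rule sum.cong)
      fix j assume "j \<in> J"
      then have "g j x = (\<Sum>S\<in>Pow {..<N}. C j S * chi S x)" using C x by blast
      then show "a j * g j x = (\<Sum>S\<in>Pow {..<N}. a j * C j S * chi S x)"
        by (simp add: sum_distrib_left mult.assoc)
    qed simp
    also have "\<dots> = (\<Sum>S\<in>Pow {..<N}. (\<Sum>j\<in>J. a j * C j S) * chi S x)"
      by (subst sum.swap) (simp add: sum_distrib_right)
    finally show "(\<Sum>j\<in>J. a j * g j x) = (\<Sum>S\<in>Pow {..<N}. (\<Sum>j\<in>J. a j * C j S) * chi S x)" .
  qed
  moreover have "\<forall>S. d < card S \<longrightarrow> (\<Sum>j\<in>J. a j * C j S) = 0" using C by simp
  ultimately show ?thesis unfolding deg_le_def by (intro exI[of _ "\<lambda>S. \<Sum>j\<in>J. a j * C j S"]) blast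
qed

lemma deg_add:
  assumes "deg_le N d g" "deg_le N d h"
  shows "deg_le N d (\<lambda>x. a * g x + b * h x)"
proof -
  have "deg_le N d (\<lambda>x. \<Sum>j\<in>{True,False}. (if j then a else b) * (if j then g else h) x)"
    by (rule deg_lin) (auto simp: assms)
  then show ?thesis by (rule deg_cong) simp
qed

definition tog :: "nat \<Rightarrow> nat set \<Rightarrow> nat set" where
  "tog i S = (if i \<in> S then S - {i} else insert i S)"

lemma tog_tog: "tog i (tog i S) = S"
  unfolding tog_def by auto

lemma chi_tog: "finite S \<Longrightarrow> chi {i} x * chi S x = (chi (tog i S) x :: 'a::comm_ring_1)"
proof (cases "i \<in> S")
  case True
  assume f: "finite S"
  have "chi S x = chi {i} x * (chi (S - {i}) x :: 'a)"
    unfolding chi_def using prod.remove[OF f True, of "\<lambda>i. if x ! i then -1 else (1::'a)"] by simp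
  then have "chi {i} x * chi S x = (chi {i} x * chi {i} x) * (chi (S - {i}) x :: 'a)" by (simp add: mult_ac)
  then show ?thesis using True by (simp add: chi_sq tog_def)
next
  case False
  assume f: "finite S"
  show ?thesis using False f unfolding chi_def tog_def by simp
qed

lemma tog_Pow: "i < N \<Longrightarrow> S \<subseteq> {..<N} \<Longrightarrow> tog i S \<subseteq> {..<N}"
  unfolding tog_def by auto

lemma card_tog: "finite S \<Longrightarrow> card S \<le> Suc (card (tog i S))"
  unfolding tog_def by (auto simp: card_insert_if)

lemma deg_chi:
  assumes "i < N" "deg_le N d g"
  shows "deg_le N (Suc d) (\<lambda>x. chi {i} x * g x)"
proof -
  obtain c where c0: "\<forall>S. d < card S \<longrightarrow> c S = 0"
    and c: "\<forall>x\<in>cube N. g x = (\<Sum>S\<in>Pow {..<N}. c S * chi S x)"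
    using assms(2) unfolding deg_le_def by blast
  have "\<forall>x\<in>cube N. chi {i} x * g x = (\<Sum>S\<in>Pow {..<N}. c (tog i S) * chi S x)"
  proof
    fix x assume x: "x \<in> cube N"
    have "chi {i} x * g x = (\<Sum>S\<in>Pow {..<N}. c S * (chi {i} x * chi S x))"
      using c x by (simp add: sum_distrib_left mult_ac)
    also have "\<dots> = (\<Sum>S\<in>Pow {..<N}. c S * chi (tog i S) x)"
    proof (rule sum.cong)
      fix S assume "S \<in> Pow {..<N}"
      then have "finite S" using finite_subset by auto
      then show "c S * (chi {i} x * chi S x) = c S * chi (tog i S) x" by (simp add: chi_tog)
    qed simp
    also have "\<dots> = (\<Sum>S\<in>Pow {..<N}. c (tog i S) * chi S x)"
      by (rule sum.reindex_bij_witness[of _ "tog i" "tog i"]) (use assms(1) in \<open>auto simp: tog_tog tog_Pow\<close>)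
    finally show "chi {i} x * g x = (\<Sum>S\<in>Pow {..<N}. c (tog i S) * chi S x)" .
  qed
  moreover have "\<forall>S. Suc d < card S \<longrightarrow> c (tog i S) = 0"
  proof (intro allI impI)
    fix S :: "nat set" assume "Suc d < card S"
    then have "card S \<noteq> 0" by simp
    then have "finite S" using card.infinite by metis
    then have "card S \<le> Suc (card (tog i S))" by (rule card_tog)
    then show "c (tog i S) = 0" using c0 \<open>Suc d < card S\<close> by simp
  qed
  ultimately show ?thesis unfolding deg_le_def by (intro exI[of _ "\<lambda>S. c (tog i S)"]) blast
qed

lemma bilinear:
  assumes "\<forall>x\<in>cube N. g x = (\<Sum>S\<in>Pow {..<N}. c S * chi S x)"
    and "\<forall>x\<in>cube N. h x = (\<Sum>S\<in>Pow {..<N}. e S * chi S x)"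
  shows "(\<Sum>x\<in>cube N. cnj (g x) * h x) = 2 ^ N * (\<Sum>S\<in>Pow {..<N}. cnj (c S) * e S)"
proof -
  have cc: "cnj (chi S x) = (chi S x :: complex)" for S x
    by (metis complex_cnj_complex_of_real of_real_chi)
  have "(\<Sum>x\<in>cube N. cnj (g x) * h x) = (\<Sum>x\<in>cube N. \<Sum>S\<in>Pow {..<N}. \<Sum>T\<in>Pow {..<N}.
      cnj (c S) * e T * (chi S x * chi T x))"
  proof (rule sum.cong)
    fix x assume x: "x \<in> cube N"
    have "cnj (g x) * h x = (\<Sum>S\<in>Pow {..<N}. cnj (c S) * chi S x) * (\<Sum>T\<in>Pow {..<N}. e T * chi T x)"
      using assms x by (simp add: cnj_sum cc)
    also have "\<dots> = (\<Sum>S\<in>Pow {..<N}. \<Sum>T\<in>Pow {..<N}. cnj (c S) * e T * (chi S x * chi T x))"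
      by (simp only: sum_product) (simp add: mult_ac)
    finally show "cnj (g x) * h x = (\<Sum>S\<in>Pow {..<N}. \<Sum>T\<in>Pow {..<N}. cnj (c S) * e T * (chi S x * chi T x))" .
  qed simp
  also have "\<dots> = (\<Sum>S\<in>Pow {..<N}. \<Sum>x\<in>cube N. \<Sum>T\<in>Pow {..<N}. cnj (c S) * e T * (chi S x * chi T x))"
    by (rule sum.swap)
  also have "\<dots> = (\<Sum>S\<in>Pow {..<N}. \<Sum>T\<in>Pow {..<N}. \<Sum>x\<in>cube N. cnj (c S) * e T * (chi S x * chi T x))"
    by (rule sum.cong[OF refl], rule sum.swap)
  also have "\<dots> = (\<Sum>S\<in>Pow {..<N}. \<Sum>T\<in>Pow {..<N}. cnj (c S) * e T * (\<Sum>x\<in>cube N. chi S x * chi T x))"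
    by (simp only: sum_distrib_left)
  also have "\<dots> = (\<Sum>S\<in>Pow {..<N}. \<Sum>T\<in>Pow {..<N}. if S = T then cnj (c S) * e T * 2 ^ N else 0)"
    by (intro sum.cong refl) (simp add: orth)
  also have "\<dots> = (\<Sum>S\<in>Pow {..<N}. cnj (c S) * e S * 2 ^ N)"
    by (simp add: sum.delta)
  also have "\<dots> = 2 ^ N * (\<Sum>S\<in>Pow {..<N}. cnj (c S) * e S)"
    by (simp add: sum_distrib_left mult.commute)
  finally show ?thesis .
qed

lemma quadratic:
  assumes N: "N \<ge> 1" and k: "odd k" and g: "deg_le N T g"
  shows "(1 - 2 * real T / real N) ^ k * (\<Sum>x\<in>cube N. (cmod (g x))\<^sup>2)
     \<le> Re (\<Sum>x\<in>cube N. cnj (g x) * walk N k g x)"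
proof -
  obtain c where c0: "\<forall>S. T < card S \<longrightarrow> c S = 0"
    and c: "\<forall>x\<in>cube N. g x = (\<Sum>S\<in>Pow {..<N}. c S * chi S x)"
    using g unfolding deg_le_def by blast
  have w: "\<forall>x\<in>cube N. walk N k g x = (\<Sum>S\<in>Pow {..<N}. (c S * of_real (mu N S) ^ k) * chi S x)"
  proof
    fix x assume x: "x \<in> cube N"
    have "walk N k g x = walk N k (\<lambda>x. \<Sum>S\<in>Pow {..<N}. c S * chi S x) x"
      by (rule walk_cong) (use c x in auto)
    also have "\<dots> = (\<Sum>S\<in>Pow {..<N}. c S * walk N k (chi S) x)"
      by (simp add: walk_sum walk_cmult)
    also have "\<dots> = (\<Sum>S\<in>Pow {..<N}. (c S * of_real (mu N S) ^ k) * chi S x)"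
      by (rule sum.cong) (use N x in \<open>auto simp: walk_chi\<close>)
    finally show "walk N k g x = (\<Sum>S\<in>Pow {..<N}. (c S * of_real (mu N S) ^ k) * chi S x)" .
  qed
  have e1: "(\<Sum>x\<in>cube N. cnj (g x) * walk N k g x) = 2 ^ N * (\<Sum>S\<in>Pow {..<N}. cnj (c S) * (c S * of_real (mu N S) ^ k))"
    by (rule bilinear[OF c w])
  have e2: "(\<Sum>x\<in>cube N. cnj (g x) * g x) = 2 ^ N * (\<Sum>S\<in>Pow {..<N}. cnj (c S) * c S)"
    by (rule bilinear[OF c c])
  have nsq: "cnj z * z = of_real ((cmod z)\<^sup>2)" for z
    by (metis complex_norm_square mult.commute)
  have "(\<Sum>x\<in>cube N. (cmod (g x))\<^sup>2) = Re (\<Sum>x\<in>cube N. cnj (g x) * g x)"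
    by (simp add: nsq Re_sum)
  also have "\<dots> = 2 ^ N * (\<Sum>S\<in>Pow {..<N}. (cmod (c S))\<^sup>2)"
    unfolding e2 by (simp add: nsq Re_sum)
  finally have A: "(\<Sum>x\<in>cube N. (cmod (g x))\<^sup>2) = 2 ^ N * (\<Sum>S\<in>Pow {..<N}. (cmod (c S))\<^sup>2)" .
  have B: "Re (\<Sum>x\<in>cube N. cnj (g x) * walk N k g x) = 2 ^ N * (\<Sum>S\<in>Pow {..<N}. (cmod (c S))\<^sup>2 * mu N S ^ k)"
  proof -
    have h: "cnj (c S) * (c S * of_real (mu N S) ^ k) = of_real ((cmod (c S))\<^sup>2 * mu N S ^ k)" for S
      by (simp only: mult.assoc[symmetric] nsq of_real_mult of_real_power)
    have "(\<Sum>S\<in>Pow {..<N}. cnj (c S) * (c S * of_real (mu N S) ^ k)) = of_real (\<Sum>S\<in>Pow {..<N}. (cmod (c S))\<^sup>2 * mu N S ^ k)"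
      by (simp only: h of_real_sum)
    moreover have "2 ^ N * complex_of_real r = complex_of_real (2 ^ N * r)" for r by simp
    ultimately show ?thesis unfolding e1 by (simp only: Re_complex_of_real)
  qed
  have "(1 - 2 * real T / real N) ^ k * (\<Sum>S\<in>Pow {..<N}. (cmod (c S))\<^sup>2)
      \<le> (\<Sum>S\<in>Pow {..<N}. (cmod (c S))\<^sup>2 * mu N S ^ k)"
    unfolding sum_distrib_left
  proof (rule sum_mono)
    fix S assume "S \<in> Pow {..<N}"
    show "(1 - 2 * real T / real N) ^ k * (cmod (c S))\<^sup>2 \<le> (cmod (c S))\<^sup>2 * mu N S ^ k"
    proof (cases "T < card S")
      case True then show ?thesis using c0 by simp
    next
      case False
      then have "1 - 2 * real T / real N \<le> mu N S"
        using N unfolding mu_def by (simp add: divide_right_mono)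
      then have "(1 - 2 * real T / real N) ^ k \<le> mu N S ^ k" by (rule power_mono_odd[OF k])
      then show ?thesis by (metis mult.commute mult_left_mono zero_le_power2)
    qed
  qed
  then show ?thesis unfolding A B by simp
qed



lemma finite_basis: "finite (basis_set N W)"
  unfolding basis_set_def by simp

lemma nsq': "cnj z * z = of_real ((cmod z)\<^sup>2)"
  by (metis complex_norm_square mult.commute)

lemma qg_apply:
  assumes "(i, a, w, r) \<in> basis_set N W"
  shows "apply_mat (basis_set N W) (query_gate x) v (i, a, w, r) = v (i, a \<noteq> x ! i, w, r)"
proof -
  let ?B = "basis_set N W"
  let ?j0 = "(i, a \<noteq> x ! i, w, r)"
  have j0: "?j0 \<in> ?B" using assms by (simp add: basis_set_def)
  have "(\<Sum>j\<in>?B. query_gate x (i, a, w, r) j * v j) = (\<Sum>j\<in>?B. if j = ?j0 then v ?j0 else 0)"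
  proof (rule sum.cong)
    fix j assume "j \<in> ?B"
    obtain j1 j2 j3 j4 where "j = (j1, j2, j3, j4)" by (cases j) auto
    then show "query_gate x (i, a, w, r) j * v j = (if j = ?j0 then v ?j0 else 0)"
      unfolding query_gate_def by auto
  qed simp
  also have "\<dots> = v ?j0" using j0 finite_basis by simp
  finally show ?thesis using assms unfolding apply_mat_def by simp
qed

lemma norm_unitary:
  assumes U: "unitary_on B U" and fB: "finite B"
  shows "(\<Sum>i\<in>B. (cmod (apply_mat B U v i))\<^sup>2) = (\<Sum>j\<in>B. (cmod (v j))\<^sup>2)"
proof -
  have "(\<Sum>i\<in>B. cnj (apply_mat B U v i) * apply_mat B U v i)
      = (\<Sum>i\<in>B. \<Sum>j\<in>B. \<Sum>l\<in>B. cnj (v j) * v l * (cnj (U i j) * U i l))"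
  proof (rule sum.cong)
    fix i assume i: "i \<in> B"
    have "cnj (apply_mat B U v i) * apply_mat B U v i
        = (\<Sum>j\<in>B. cnj (U i j) * cnj (v j)) * (\<Sum>l\<in>B. U i l * v l)"
      using i by (simp add: apply_mat_def cnj_sum)
    also have "\<dots> = (\<Sum>j\<in>B. \<Sum>l\<in>B. cnj (v j) * v l * (cnj (U i j) * U i l))"
      by (simp only: sum_product) (simp add: mult_ac)
    finally show "cnj (apply_mat B U v i) * apply_mat B U v i
        = (\<Sum>j\<in>B. \<Sum>l\<in>B. cnj (v j) * v l * (cnj (U i j) * U i l))" .
  qed simp
  also have "\<dots> = (\<Sum>j\<in>B. \<Sum>i\<in>B. \<Sum>l\<in>B. cnj (v j) * v l * (cnj (U i j) * U i l))"
    by (rule sum.swap)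
  also have "\<dots> = (\<Sum>j\<in>B. \<Sum>l\<in>B. \<Sum>i\<in>B. cnj (v j) * v l * (cnj (U i j) * U i l))"
    by (rule sum.cong[OF refl], rule sum.swap)
  also have "\<dots> = (\<Sum>j\<in>B. \<Sum>l\<in>B. cnj (v j) * v l * (\<Sum>i\<in>B. cnj (U i j) * U i l))"
    by (simp only: sum_distrib_left)
  also have "\<dots> = (\<Sum>j\<in>B. \<Sum>l\<in>B. if j = l then cnj (v j) * v j else 0)"
    using U unfolding unitary_on_def by (intro sum.cong refl) auto
  also have "\<dots> = (\<Sum>j\<in>B. cnj (v j) * v j)"
    using fB by simp
  finally have "(\<Sum>i\<in>B. cnj (apply_mat B U v i) * apply_mat B U v i) = (\<Sum>j\<in>B. cnj (v j) * v j)" .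
  then have "complex_of_real (\<Sum>i\<in>B. (cmod (apply_mat B U v i))\<^sup>2) = of_real (\<Sum>j\<in>B. (cmod (v j))\<^sup>2)"
    by (simp only: nsq' of_real_sum)
  then show ?thesis using of_real_eq_iff by blast
qed

lemma norm_qg:
  "(\<Sum>b\<in>basis_set N W. (cmod (apply_mat (basis_set N W) (query_gate x) v b))\<^sup>2)
   = (\<Sum>b\<in>basis_set N W. (cmod (v b))\<^sup>2)"
proof -
  let ?B = "basis_set N W"
  define \<sigma> where "\<sigma> = (\<lambda>(i::nat, a::bool, w::nat, r::bool). (i, a \<noteq> x ! i, w, r))"
  have s2: "\<sigma> (\<sigma> b) = b" for b unfolding \<sigma>_def by (cases b) auto
  have sB: "b \<in> ?B \<Longrightarrow> \<sigma> b \<in> ?B" for b unfolding \<sigma>_def basis_set_def by (cases b) auto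
  have "(\<Sum>b\<in>?B. (cmod (apply_mat ?B (query_gate x) v b))\<^sup>2) = (\<Sum>b\<in>?B. (cmod (v (\<sigma> b)))\<^sup>2)"
  proof (rule sum.cong)
    fix b assume "b \<in> ?B"
    moreover obtain i a w r where "b = (i, a, w, r)" by (cases b) auto
    ultimately show "(cmod (apply_mat ?B (query_gate x) v b))\<^sup>2 = (cmod (v (\<sigma> b)))\<^sup>2"
      by (simp add: qg_apply \<sigma>_def)
  qed simp
  also have "\<dots> = (\<Sum>b\<in>?B. (cmod (v b))\<^sup>2)"
    by (rule sum.reindex_bij_witness[of _ \<sigma> \<sigma>]) (auto simp: s2 sB)
  finally show ?thesis .
qed

definition qstep :: "nat \<Rightarrow> nat \<Rightarrow> bool list \<Rightarrow> qstate \<Rightarrow> qmat \<Rightarrow> qstate" where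
  "qstep N W x v U = apply_mat (basis_set N W) U (apply_mat (basis_set N W) (query_gate x) v)"

lemma final_state_foldl:
  "final_state N W b0 U0 Us x = foldl (qstep N W x) (apply_mat (basis_set N W) U0 (ket b0)) Us"
  unfolding final_state_def qstep_def by simp

lemma norm_foldl:
  assumes "\<forall>U\<in>set Us. unitary_on (basis_set N W) U"
  shows "(\<Sum>b\<in>basis_set N W. (cmod (foldl (qstep N W x) v Us b))\<^sup>2) = (\<Sum>b\<in>basis_set N W. (cmod (v b))\<^sup>2)"
  using assms
proof (induction Us arbitrary: v)
  case Nil
  then show ?case by simp
next
  case (Cons U Us)
  then have "(\<Sum>b\<in>basis_set N W. (cmod (foldl (qstep N W x) v (U # Us) b))\<^sup>2)
     = (\<Sum>b\<in>basis_set N W. (cmod (qstep N W x v U b))\<^sup>2)" by simp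
  also have "\<dots> = (\<Sum>b\<in>basis_set N W. (cmod (v b))\<^sup>2)"
    unfolding qstep_def using Cons.prems
    by (simp add: norm_unitary[OF _ finite_basis] norm_qg)
  finally show ?case .
qed

lemma norm_final:
  assumes "computes_with_error N W b0 U0 Us f \<epsilon>"
  shows "(\<Sum>b\<in>basis_set N W. (cmod (final_state N W b0 U0 Us x b))\<^sup>2) = 1"
proof -
  have b0: "b0 \<in> basis_set N W" and U0: "unitary_on (basis_set N W) U0"
    and Us: "\<forall>U\<in>set Us. unitary_on (basis_set N W) U"
    using assms unfolding computes_with_error_def by auto
  have "(\<Sum>b\<in>basis_set N W. (cmod (final_state N W b0 U0 Us x b))\<^sup>2)
     = (\<Sum>b\<in>basis_set N W. (cmod (ket b0 b))\<^sup>2)"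
    unfolding final_state_foldl norm_foldl[OF Us] by (rule norm_unitary[OF U0 finite_basis])
  also have "\<dots> = (\<Sum>b\<in>basis_set N W. if b = b0 then 1 else 0)"
    by (rule sum.cong) (auto simp: ket_def)
  also have "\<dots> = 1" using b0 finite_basis by simp
  finally show ?thesis .
qed



lemma deg_query:
  assumes V: "\<forall>b. deg_le N d (\<lambda>x. V x b)" and j: "(i, a, w, r) \<in> basis_set N W"
  shows "deg_le N (Suc d) (\<lambda>x. apply_mat (basis_set N W) (query_gate x) (V x) (i, a, w, r))"
proof -
  have iN: "i < N" using j by (simp add: basis_set_def)
  let ?p = "\<lambda>x. V x (i, a, w, r)" and ?q = "\<lambda>x. V x (i, \<not> a, w, r)"
  have d1: "deg_le N d (\<lambda>x. (1/2) * ?p x + (1/2) * ?q x)" by (rule deg_add) (use V in auto)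
  have d2: "deg_le N d (\<lambda>x. (1/2) * ?p x + (-1/2) * ?q x)" by (rule deg_add) (use V in auto)
  have d3: "deg_le N (Suc d) (\<lambda>x. chi {i} x * ((1/2) * ?p x + (-1/2) * ?q x))"
    by (rule deg_chi[OF iN d2])
  have d4: "deg_le N (Suc d) (\<lambda>x. 1 * ((1/2) * ?p x + (1/2) * ?q x) + 1 * (chi {i} x * ((1/2) * ?p x + (-1/2) * ?q x)))"
    by (rule deg_add[OF deg_mono[OF d1] d3]) simp
  show ?thesis
  proof (rule deg_cong[OF d4], intro ballI)
    fix x assume "x \<in> cube N"
    show "1 * ((1/2) * ?p x + (1/2) * ?q x) + 1 * (chi {i} x * ((1/2) * ?p x + (-1/2) * ?q x))
        = apply_mat (basis_set N W) (query_gate x) (V x) (i, a, w, r)"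
      using j by (cases "x ! i") (auto simp: qg_apply chi_single field_simps)
  qed
qed

lemma deg_qstep:
  assumes V: "\<forall>b. deg_le N d (\<lambda>x. V x b)"
  shows "deg_le N (Suc d) (\<lambda>x. qstep N W x (V x) U b)"
proof (cases "b \<in> basis_set N W")
  case False
  then show ?thesis unfolding qstep_def apply_mat_def by (simp add: deg_const)
next
  case True
  have "deg_le N (Suc d) (\<lambda>x. \<Sum>j\<in>basis_set N W. U b j * apply_mat (basis_set N W) (query_gate x) (V x) j)"
  proof (rule deg_lin[OF finite_basis], intro ballI)
    fix j assume j: "j \<in> basis_set N W"
    obtain i a w r where "j = (i, a, w, r)" by (cases j) auto
    then show "deg_le N (Suc d) (\<lambda>x. apply_mat (basis_set N W) (query_gate x) (V x) j)"
      using deg_query[OF V] j by simp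
  qed
  then show ?thesis using True unfolding qstep_def apply_mat_def[of _ U] by simp
qed

lemma deg_foldl:
  assumes "\<forall>b. deg_le N d (\<lambda>x. V x b)"
  shows "\<forall>b. deg_le N (d + length Us) (\<lambda>x. foldl (qstep N W x) (V x) Us b)"
  using assms
proof (induction Us arbitrary: V d)
  case Nil
  then show ?case by simp
next
  case (Cons U Us)
  have "\<forall>b. deg_le N (Suc d) (\<lambda>x. qstep N W x (V x) U b)"
    using deg_qstep[OF Cons.prems] by blast
  from Cons.IH[OF this] show ?case by simp
qed

lemma deg_final: "deg_le N (length Us) (\<lambda>x. final_state N W b0 U0 Us x b)"
proof -
  have "\<forall>b. deg_le N 0 (\<lambda>x. apply_mat (basis_set N W) U0 (ket b0) b)"
    by (simp add: deg_const)
  from deg_foldl[OF this, where Us=Us and W=W] show ?thesis unfolding final_state_foldl by (metis add_0)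
qed

lemma cs_complex:
  "cmod (\<Sum>b\<in>A. cnj (u b) * v b) \<le> sqrt (\<Sum>b\<in>A. (cmod (u b))\<^sup>2) * sqrt (\<Sum>b\<in>A. (cmod (v b))\<^sup>2)"
proof -
  have "cmod (\<Sum>b\<in>A. cnj (u b) * v b) \<le> (\<Sum>b\<in>A. cmod (cnj (u b) * v b))"
    by (rule norm_sum)
  also have "\<dots> = (\<Sum>b\<in>A. \<bar>cmod (u b)\<bar> * \<bar>cmod (v b)\<bar>)"
    by (simp add: norm_mult)
  also have "\<dots> \<le> L2_set (\<lambda>b. cmod (u b)) A * L2_set (\<lambda>b. cmod (v b)) A"
    by (rule L2_set_mult_ineq)
  finally show ?thesis by (simp add: L2_set_def)
qed



lemma split_B:
  "(\<Sum>b\<in>basis_set N W. h b) = (\<Sum>b\<in>{b\<in>basis_set N W. snd (snd (snd b)) = True}. h b)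
     + (\<Sum>b\<in>{b\<in>basis_set N W. snd (snd (snd b)) = False}. h b)"
proof -
  let ?B1 = "{b\<in>basis_set N W. snd (snd (snd b)) = True}" and ?B0 = "{b\<in>basis_set N W. snd (snd (snd b)) = False}"
  have "(\<Sum>b\<in>?B1 \<union> ?B0. h b) = (\<Sum>b\<in>?B1. h b) + (\<Sum>b\<in>?B0. h b)"
    by (rule sum.union_disjoint) (auto intro: finite_subset[OF _ finite_basis])
  moreover have "?B1 \<union> ?B0 = basis_set N W" by auto
  ultimately show ?thesis by simp
qed

lemma prob_sum:
  assumes "computes_with_error N W b0 U0 Us f \<epsilon>"
  shows "prob_result N W b0 U0 Us x r + prob_result N W b0 U0 Us x (\<not> r) = 1"
    and "prob_result N W b0 U0 Us x r \<ge> 0"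
proof -
  have "prob_result N W b0 U0 Us x True + prob_result N W b0 U0 Us x False = 1"
    unfolding prob_result_def using norm_final[OF assms, of x]
      split_B[where N=N and W=W and h="\<lambda>b. (cmod (final_state N W b0 U0 Us x b))\<^sup>2"] by simp
  then show "prob_result N W b0 U0 Us x r + prob_result N W b0 U0 Us x (\<not> r) = 1"
    by (cases r) simp_all
  show "prob_result N W b0 U0 Us x r \<ge> 0"
    unfolding prob_result_def by (simp add: sum_nonneg)
qed

lemma inner_bound:
  assumes cwe: "computes_with_error N W b0 U0 Us f \<epsilon>"
    and fpm: "\<forall>x\<in>cube N. f x = 1 \<or> f x = -1"
    and x: "x \<in> cube N" and y: "y \<in> cube N" and eps: "\<epsilon> \<ge> 0"
  shows "Re (\<Sum>b\<in>basis_set N W. cnj (final_state N W b0 U0 Us x b) * final_state N W b0 U0 Us y b)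
     \<le> (1 + 2 * sqrt \<epsilon>) / 2 + (1 - 2 * sqrt \<epsilon>) / 2 * (f x * f y)"
proof -
  let ?B = "basis_set N W"
  let ?\<psi> = "final_state N W b0 U0 Us"
  let ?P = "prob_result N W b0 U0 Us"
  let ?I = "\<Sum>b\<in>?B. cnj (?\<psi> x b) * ?\<psi> y b"
  have ReI: "Re ?I \<le> cmod ?I" by (rule complex_Re_le_cmod)
  show ?thesis
  proof (cases "f x = f y")
    case True
    have c1: "cmod ?I \<le> sqrt 1 * sqrt 1"
      using cs_complex[of "?\<psi> x" "?\<psi> y" ?B] norm_final[OF cwe] by metis
    have "f y = 1 \<or> f y = -1" using fpm x True by metis
    then have "f x * f y = 1" using True by auto
    then have "(1 + 2 * sqrt \<epsilon>) / 2 + (1 - 2 * sqrt \<epsilon>) / 2 * (f x * f y) = 1" by (simp add: field_simps)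
    then show ?thesis using ReI c1 by simp
  next
    case False
    have "f x = 1 \<or> f x = -1" "f y = 1 \<or> f y = -1" using fpm x y by auto
    then have fxy: "f x * f y = -1" using False by auto
    have px: "?P x (f x = -1) \<ge> 1 - \<epsilon>" and py: "?P y (f y = -1) \<ge> 1 - \<epsilon>"
      using cwe x y unfolding computes_with_error_def by auto
    have ne: "(f x = -1) \<noteq> (f y = -1)" using False \<open>f x = 1 \<or> f x = -1\<close> \<open>f y = 1 \<or> f y = -1\<close> by auto
    have prodb: "?P x r * ?P y r \<le> \<epsilon>" for r
    proof -
      have s: "?P z r + ?P z (\<not> r) = 1" "?P z r \<ge> 0" "?P z (\<not> r) \<ge> 0" for z
        using prob_sum[OF cwe] by blast+
      show ?thesis
      proof (cases "r = (f x = -1)")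
        case True
        then have "\<not> r = (f y = -1)" using ne by auto
        then have "?P y r \<le> \<epsilon>" using py s[of y] by auto
        moreover have "?P x r \<le> 1" using s[of x] by linarith
        ultimately have "?P x r * ?P y r \<le> 1 * ?P y r" using s[of y] by (intro mult_right_mono) auto
        then show ?thesis using \<open>?P y r \<le> \<epsilon>\<close> by simp
      next
        case False
        then have "\<not> r = (f x = -1)" by auto
        then have "?P x r \<le> \<epsilon>" using px s[of x] by auto
        moreover have "?P y r \<le> 1" using s[of y] by linarith
        ultimately have "?P x r * ?P y r \<le> ?P x r * 1" using s[of x] by (intro mult_left_mono) auto
        then show ?thesis using \<open>?P x r \<le> \<epsilon>\<close> by simp
      qed
    qed
    have part: "cmod (\<Sum>b\<in>{b\<in>?B. snd (snd (snd b)) = r}. cnj (?\<psi> x b) * ?\<psi> y b) \<le> sqrt \<epsilon>" for r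
    proof -
      have "cmod (\<Sum>b\<in>{b\<in>?B. snd (snd (snd b)) = r}. cnj (?\<psi> x b) * ?\<psi> y b) \<le> sqrt (?P x r) * sqrt (?P y r)"
        unfolding prob_result_def by (rule cs_complex)
      also have "\<dots> = sqrt (?P x r * ?P y r)" by (simp add: real_sqrt_mult)
      also have "\<dots> \<le> sqrt \<epsilon>" using prodb by simp
      finally show ?thesis .
    qed
    have "cmod ?I \<le> cmod (\<Sum>b\<in>{b\<in>?B. snd (snd (snd b)) = True}. cnj (?\<psi> x b) * ?\<psi> y b)
        + cmod (\<Sum>b\<in>{b\<in>?B. snd (snd (snd b)) = False}. cnj (?\<psi> x b) * ?\<psi> y b)"
      by (subst split_B) (rule norm_triangle_ineq)
    also have "\<dots> \<le> sqrt \<epsilon> + sqrt \<epsilon>" using part[of True] part[of False] by linarith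
    finally show ?thesis using ReI fxy by (simp add: field_simps)
  qed
qed



lemma f_side:
  fixes f :: "bool list \<Rightarrow> real"
  assumes N: "N \<ge> 1"
  shows "(\<Sum>x\<in>cube N. f x * walk N k f x) = 2 ^ N * (\<Sum>S\<in>Pow {..<N}. (fhat N f S)\<^sup>2 * mu N S ^ k)"
proof -
  have w: "walk N k f x = (\<Sum>S\<in>Pow {..<N}. fhat N f S * mu N S ^ k * chi S x)" if x: "x \<in> cube N" for x
  proof -
    have "walk N k f x = walk N k (\<lambda>x. \<Sum>S\<in>Pow {..<N}. fhat N f S * chi S x) x"
      by (rule walk_cong) (use x expansion in auto)
    also have "\<dots> = (\<Sum>S\<in>Pow {..<N}. fhat N f S * walk N k (chi S) x)"
      by (simp add: walk_sum walk_cmult)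
    also have "\<dots> = (\<Sum>S\<in>Pow {..<N}. fhat N f S * mu N S ^ k * chi S x)"
      by (rule sum.cong) (use N x in \<open>auto simp: walk_chi\<close>)
    finally show ?thesis .
  qed
  have "(\<Sum>x\<in>cube N. f x * walk N k f x) = (\<Sum>x\<in>cube N. \<Sum>S\<in>Pow {..<N}. fhat N f S * mu N S ^ k * (f x * chi S x))"
    by (rule sum.cong) (simp_all add: w sum_distrib_left mult_ac)
  also have "\<dots> = (\<Sum>S\<in>Pow {..<N}. \<Sum>x\<in>cube N. fhat N f S * mu N S ^ k * (f x * chi S x))"
    by (rule sum.swap)
  also have "\<dots> = (\<Sum>S\<in>Pow {..<N}. fhat N f S * mu N S ^ k * (\<Sum>x\<in>cube N. f x * chi S x))"
    by (simp only: sum_distrib_left)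
  also have "\<dots> = (\<Sum>S\<in>Pow {..<N}. fhat N f S * mu N S ^ k * (2 ^ N * fhat N f S))"
    by (simp add: fhat_def)
  also have "\<dots> = 2 ^ N * (\<Sum>S\<in>Pow {..<N}. (fhat N f S)\<^sup>2 * mu N S ^ k)"
    by (simp add: sum_distrib_left power2_eq_square mult_ac)
  finally show ?thesis .
qed

definition setof :: "nat \<Rightarrow> bool list \<Rightarrow> nat set" where
  "setof N s = {i. i < N \<and> s ! i}"

lemma chi_dotp:
  assumes "s \<in> cube N" "x \<in> cube N"
  shows "(-1) ^ dotp s x = (chi (setof N s) x :: real)"
proof -
  have "chi (setof N s) x = (\<Prod>i\<in>setof N s \<inter> {i. x ! i}. (-1::real)) * (\<Prod>i\<in>setof N s \<inter> - {i. x ! i}. 1)"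
    unfolding chi_def by (rule prod.If_cases) (simp add: setof_def)
  also have "\<dots> = (-1) ^ card (setof N s \<inter> {i. x ! i})" by simp
  also have "setof N s \<inter> {i. x ! i} = {i. i < length s \<and> i < length x \<and> s ! i \<and> x ! i}"
    using assms by (auto simp: setof_def cube_def)
  finally show ?thesis by (simp add: dotp_def)
qed

lemma conv:
  fixes f :: "bool list \<Rightarrow> real"
  shows "(\<Sum>s\<in>cube N. (fourier N f s)\<^sup>2 * (1 - 2 * (real (hweight s) / real N)) ^ k)
     = (\<Sum>S\<in>Pow {..<N}. (fhat N f S)\<^sup>2 * mu N S ^ k)"
proof (rule sum.reindex_bij_witness[of _ "\<lambda>S. map (\<lambda>i. i \<in> S) [0..<N]" "setof N"])
  fix S assume "S \<in> Pow {..<N}"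
  then show "setof N (map (\<lambda>i. i \<in> S) [0..<N]) = S" by (auto simp: setof_def)
  show "map (\<lambda>i. i \<in> S) [0..<N] \<in> cube N" by (simp add: cube_def)
next
  fix s assume s: "s \<in> cube N"
  then show "map (\<lambda>i. i \<in> setof N s) [0..<N] = s"
    by (intro nth_equalityI) (auto simp: cube_def setof_def)
  show "setof N s \<in> Pow {..<N}" by (auto simp: setof_def)
  have "fourier N f s = fhat N f (setof N s)"
    unfolding fourier_def fhat_def using s by (simp add: chi_dotp)
  moreover have "hweight s = card (setof N s)"
    using s by (simp add: hweight_def setof_def cube_def)
  ultimately show "(fhat N f (setof N s))\<^sup>2 * mu N (setof N s) ^ k
      = (fourier N f s)\<^sup>2 * (1 - 2 * (real (hweight s) / real N)) ^ k"
    by (simp add: mu_def)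
qed



theorem theorem4:
  fixes N W k :: nat and f :: "bool list \<Rightarrow> real" and \<epsilon> :: real
    and b0 :: basis and U0 :: qmat and Us :: "qmat list"
  assumes "N \<ge> 1"
    and "\<forall>x\<in>cube N. f x = 1 \<or> f x = -1"
    and "computes_with_error N W b0 U0 Us f \<epsilon>"
    and "odd k"
  shows "real (length Us) \<ge>
    1/2 * (1 - root k ((1 + 2 * sqrt \<epsilon>) / 2 + (1 - 2 * sqrt \<epsilon>) / 2 *
       (\<Sum>s\<in>cube N. (fourier N f s)\<^sup>2 * (1 - 2 * (real (hweight s) / real N)) ^ k))) * real N"
proof -
  note N = assms(1) and fpm = assms(2) and cwe = assms(3) and k = assms(4)
  let ?B = "basis_set N W"
  let ?\<psi> = "final_state N W b0 U0 Us"
  let ?T = "length Us"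
  define m where "m = 1 - 2 * real ?T / real N"
  define \<alpha> where "\<alpha> = (1 + 2 * sqrt \<epsilon>) / 2"
  define \<beta> where "\<beta> = (1 - 2 * sqrt \<epsilon>) / 2"
  define SS where "SS = (\<Sum>S\<in>Pow {..<N}. (fhat N f S)\<^sup>2 * mu N S ^ k)"
  have x0: "replicate N False \<in> cube N" by (simp add: cube_def)
  have eps: "\<epsilon> \<ge> 0"
  proof (rule ccontr)
    assume "\<not> \<epsilon> \<ge> 0"
    moreover have "prob_result N W b0 U0 Us (replicate N False) (f (replicate N False) = -1) \<ge> 1 - \<epsilon>"
      using cwe x0 unfolding computes_with_error_def by blast
    moreover have "prob_result N W b0 U0 Us (replicate N False) (f (replicate N False) = -1) \<le> 1"
      using prob_sum(1)[OF cwe, of "replicate N False" "f (replicate N False) = -1"]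
        prob_sum(2)[OF cwe, of "replicate N False" "f (replicate N False) \<noteq> -1"] by linarith
    ultimately show False by linarith
  qed
  define G where "G = (\<Sum>b\<in>?B. \<Sum>x\<in>cube N. cnj (?\<psi> x b) * walk N k (\<lambda>y. ?\<psi> y b) x)"
  have LB: "m ^ k * 2 ^ N \<le> Re G"
  proof -
    have "m ^ k * 2 ^ N = m ^ k * (\<Sum>x\<in>cube N. \<Sum>b\<in>?B. (cmod (?\<psi> x b))\<^sup>2)"
      using norm_final[OF cwe] by (simp add: card_cube)
    also have "\<dots> = (\<Sum>b\<in>?B. m ^ k * (\<Sum>x\<in>cube N. (cmod (?\<psi> x b))\<^sup>2))"
      by (simp add: sum_distrib_left sum.swap[of _ "cube N"])
    also have "\<dots> \<le> (\<Sum>b\<in>?B. Re (\<Sum>x\<in>cube N. cnj (?\<psi> x b) * walk N k (\<lambda>y. ?\<psi> y b) x))"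
      unfolding m_def by (rule sum_mono) (rule quadratic[OF N k deg_final])
    also have "\<dots> = Re G" by (simp add: G_def Re_sum)
    finally show ?thesis .
  qed
  have UB: "Re G \<le> 2 ^ N * (\<alpha> + \<beta> * SS)"
  proof -
    have "G = (\<Sum>x\<in>cube N. walk N k (\<lambda>y. \<Sum>b\<in>?B. cnj (?\<psi> x b) * ?\<psi> y b) x)"
      unfolding G_def by (simp add: walk_sum walk_cmult sum.swap[of _ "cube N"])
    then have "Re G = (\<Sum>x\<in>cube N. walk N k (\<lambda>y. Re (\<Sum>b\<in>?B. cnj (?\<psi> x b) * ?\<psi> y b)) x)"
      by (simp add: Re_sum Re_walk)
    also have "\<dots> \<le> (\<Sum>x\<in>cube N. walk N k (\<lambda>y. \<alpha> + (\<beta> * f x) * f y) x)"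
    proof (rule sum_mono)
      fix x assume x: "x \<in> cube N"
      show "walk N k (\<lambda>y. Re (\<Sum>b\<in>?B. cnj (?\<psi> x b) * ?\<psi> y b)) x \<le> walk N k (\<lambda>y. \<alpha> + (\<beta> * f x) * f y) x"
        using inner_bound[OF cwe fpm x _ eps] x unfolding \<alpha>_def \<beta>_def
        by (intro walk_mono) (auto simp: mult_ac)
    qed
    also have "\<dots> = (\<Sum>x\<in>cube N. \<alpha> + \<beta> * (f x * walk N k f x))"
      using N by (simp add: walk_add walk_const walk_cmult mult_ac)
    also have "\<dots> = 2 ^ N * \<alpha> + \<beta> * (\<Sum>x\<in>cube N. f x * walk N k f x)"
      by (simp add: sum.distrib sum_distrib_left card_cube)
    also have "\<dots> = 2 ^ N * (\<alpha> + \<beta> * SS)"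
      using f_side[OF N, of f k] by (simp add: SS_def algebra_simps)
    finally show ?thesis .
  qed
  have "m ^ k * 2 ^ N \<le> (\<alpha> + \<beta> * SS) * 2 ^ N" using order_trans[OF LB UB] by (metis mult.commute)
  then have "m ^ k \<le> \<alpha> + \<beta> * SS" by (rule mult_right_le_imp_le) simp
  then have "root k (m ^ k) \<le> root k (\<alpha> + \<beta> * SS)"
    using k by (intro real_root_le_mono) (auto intro: odd_pos)
  then have "m \<le> root k (\<alpha> + \<beta> * SS)" using k by (simp add: odd_real_root_power_cancel)
  then have "1 - root k (\<alpha> + \<beta> * SS) \<le> 2 * real ?T / real N" unfolding m_def by linarith
  then have "(1 - root k (\<alpha> + \<beta> * SS)) * real N \<le> 2 * real ?T"
    using N by (simp add: pos_le_divide_eq)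
  then show ?thesis unfolding \<alpha>_def \<beta>_def SS_def conv[symmetric] by simp
qed


end
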